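(* Let $1<q<n+1$ and $\lambda_i=\frac{i+\min\{i,q-1\}}{n+q-1}$ for $i=1,\dots,n-1$. Let $\mu$ be a finite Borel measure on $S^{n-1}$ satisfying $\frac{\mu(\xi_i\cap S^{n-1})}{|\mu|}<\lambda_i$ for every $i$-dimensional linear subspace $\xi_i\subset\mathbb R^n$ and every $i=1,\dots,n-1$, and let $\overline\mu_m$ be constructed as in the context. Then there exist $\widetilde\lambda_i\in(0,\lambda_i)$ ($i=1,\dots,n-1$), $N_0>0$ and $\eta_0\in(0,1)$ such that for all $m>N_0$, $$\frac{\overline\mu_m\big(\mathfrak N_{\eta_0}(\xi_i\cap S^{n-1})\big)}{|\mu|}<\widetilde\lambda_i$$ for every $i$-dimensional subspace $\xi_i\subset\mathbb R^n$ and every $i=1,\dots,n-1$.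
   Context: $|\nu|$ denotes total mass. For $\omega\subset S^{n-1}$ and $\eta>0$, $\mathfrak N_\eta(\omega)=\{v\in S^{n-1}: |v-u|<\eta\text{ for some }u\in\omega\}$. Construction: for each positive integer $m$, $U_{1,m},\dots,U_{\mathcal N_m,m}$ is a partition of $S^{n-1}$ into Borel sets of diameter less than $1/m$ with nonempty interior relative to $S^{n-1}$, $v_{i,m}\in U_{i,m}$ are in general position in dimension $n$, $\mu_m=\sum_{i=1}^{\mathcal N_m}(\mu(U_{i,m})+\mathcal N_m^{-2})\delta_{v_{i,m}}$ and $\overline\mu_m=\frac{|\mu|}{|\mu_m|}\mu_m$. *)

theory Defs
  imports "HOL-Analysis.Analysis"
begin

text \<open>The unit sphere S^{n-1} is sphere 0 1 in a Euclidean space of dimension n.\<close>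

definition lam :: "nat \<Rightarrow> real \<Rightarrow> nat \<Rightarrow> real" where
  "lam n q i = (real i + min (real i) (q - 1)) / (real n + q - 1)"

definition nbhd :: "real \<Rightarrow> 'a::euclidean_space set \<Rightarrow> 'a set" where
  "nbhd \<eta> \<omega> = {w \<in> sphere 0 1. \<exists>u\<in>\<omega>. norm (w - u) < \<eta>}"

definition general_position :: "nat \<Rightarrow> nat set \<Rightarrow> (nat \<Rightarrow> 'a::euclidean_space) \<Rightarrow> bool" where
  "general_position n I v \<longleftrightarrow>
     (\<forall>J \<subseteq> I. card J \<le> n \<longrightarrow> inj_on v J \<and> independent (v ` J))"

definition admissible_partition ::
  "'a::euclidean_space measure \<Rightarrow> nat \<Rightarrow> nat \<Rightarrow> (nat \<Rightarrow> 'a set) \<Rightarrow> (nat \<Rightarrow> 'a) \<Rightarrow> bool" where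
  "admissible_partition \<mu> m N U v \<longleftrightarrow>
     (\<Union>i\<in>{1..N}. U i) = sphere 0 1 \<and>
     (\<forall>i\<in>{1..N}. \<forall>j\<in>{1..N}. i \<noteq> j \<longrightarrow> U i \<inter> U j = {}) \<and>
     (\<forall>i\<in>{1..N}. U i \<in> sets (borel :: 'a measure) \<and> U i \<subseteq> sphere 0 1 \<and>
        diameter (U i) < 1 / real m \<and>
        (\<exists>W. openin (top_of_set (sphere 0 1)) W \<and> W \<noteq> {} \<and> W \<subseteq> U i) \<and>
        v i \<in> U i) \<and>
     general_position DIM('a) {1..N} v"

definition mu_m_mass :: "'a measure \<Rightarrow> nat \<Rightarrow> (nat \<Rightarrow> 'a set) \<Rightarrow> real" where
  "mu_m_mass \<mu> N U = (\<Sum>i\<in>{1..N}. measure \<mu> (U i) + 1 / (real N)^2)"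

text \<open>mu_m(A) for the discrete measure sum_i (mu(U_i) + N^{-2}) delta_{v_i}.\<close>
definition mu_m :: "'a measure \<Rightarrow> nat \<Rightarrow> (nat \<Rightarrow> 'a set) \<Rightarrow> (nat \<Rightarrow> 'a) \<Rightarrow> 'a set \<Rightarrow> real" where
  "mu_m \<mu> N U v A = (\<Sum>i\<in>{1..N}. if v i \<in> A then measure \<mu> (U i) + 1 / (real N)^2 else 0)"

definition mubar_m :: "'a measure \<Rightarrow> nat \<Rightarrow> (nat \<Rightarrow> 'a set) \<Rightarrow> (nat \<Rightarrow> 'a) \<Rightarrow> 'a set \<Rightarrow> real" where
  "mubar_m \<mu> N U v A = measure \<mu> (space \<mu>) / mu_m_mass \<mu> N U * mu_m \<mu> N U v A"

end

theory Submission imports Defs begin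
lemma tuple_subseq:
  fixes b :: "nat \<Rightarrow> nat \<Rightarrow> 'a::euclidean_space"
  assumes "\<And>k j. j < i \<Longrightarrow> norm (b k j) = 1"
  shows "\<exists>r c. strict_mono r \<and> (\<forall>j<i. ((\<lambda>k. b (r k) j) \<longlonglongrightarrow> c j))"
  using assms
proof (induction i)
  case 0
  then show ?case by (intro exI[of _ id]) (auto simp: strict_mono_def)
next
  case (Suc i)
  then obtain r c where r: "strict_mono r" and c: "\<forall>j<i. ((\<lambda>k. b (r k) j) \<longlonglongrightarrow> c j)"
    by (meson less_SucI)
  have "\<forall>k. (\<lambda>k. b (r k) i) k \<in> sphere 0 1" using Suc.prems by simp
  then obtain l r' where l: "l \<in> sphere (0::'a) 1" and r': "strict_mono r'"
      and lim: "((\<lambda>k. b (r k) i) \<circ> r') \<longlonglongrightarrow> l"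
    using compact_sphere[of "0::'a" 1] unfolding compact_eq_seq_compact_metric seq_compact_def
    by metis
  show ?case
  proof (intro exI conjI allI impI)
    show "strict_mono (r \<circ> r')" using r r' by (simp add: strict_mono_o)
    fix j assume "j < Suc i"
    show "(\<lambda>k. b ((r \<circ> r') k) j) \<longlonglongrightarrow> (c(i := l)) j"
    proof (cases "j = i")
      case True then show ?thesis using lim by (simp add: o_def)
    next
      case False
      then have "j < i" using \<open>j < Suc i\<close> by simp
      then have "(\<lambda>k. b (r k) j) \<longlonglongrightarrow> c j" using c by simp
      from LIMSEQ_subseq_LIMSEQ[OF this r'] show ?thesis using False by (simp add: o_def)
    qed
  qed
qed
lemma basis_fun:
  fixes \<xi> :: "'a::euclidean_space set"
  assumes "subspace \<xi>" "dim \<xi> = i"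
  shows "\<exists>f. (\<forall>j<i. \<forall>l<i. f j \<bullet> f l = (if j = l then 1 else 0)) \<and> \<xi> = span (f ` {..<i})"
proof -
  obtain B where B: "B \<subseteq> \<xi>" "pairwise orthogonal B" "\<And>x. x \<in> B \<Longrightarrow> norm x = 1"
    "independent B" "card B = dim \<xi>" "span B = \<xi>"
    using orthonormal_basis_subspace[OF assms(1)] by metis
  have "finite B" using B(4) independent_imp_finite by blast
  then obtain h where h: "bij_betw h {0..<card B} B" using ex_bij_betw_nat_finite by blast
  have hB: "h ` {..<i} = B" using h B(5) assms(2) by (simp add: bij_betw_def lessThan_atLeast0)
  have inj: "inj_on h {..<i}" using h B(5) assms(2) by (simp add: bij_betw_def lessThan_atLeast0)
  show ?thesis
  proof (intro exI conjI allI impI)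
    fix j l assume jl: "j < i" "l < i"
    show "h j \<bullet> h l = (if j = l then 1 else 0)"
    proof (cases "j = l")
      case True
      then show ?thesis using B(3)[of "h j"] hB jl by (auto simp: dot_square_norm)
    next
      case False
      then have "h j \<noteq> h l" using inj jl by (auto simp: inj_on_def)
      then show ?thesis using B(2) hB jl False by (auto simp: pairwise_def orthogonal_def)
    qed
  next
    show "\<xi> = span (h ` {..<i})" using hB B(6) by simp
  qed
qed

lemma expand_orth:
  fixes f :: "nat \<Rightarrow> 'a::euclidean_space"
  assumes orth: "\<forall>j<i. \<forall>l<i. f j \<bullet> f l = (if j = l then 1 else 0)"
    and u: "u \<in> span (f ` {..<i})"
  shows "u = (\<Sum>j<i. (u \<bullet> f j) *\<^sub>R f j)"
proof -
  let ?w = "u - (\<Sum>j<i. (u \<bullet> f j) *\<^sub>R f j)"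
  have "(\<Sum>j<i. (u \<bullet> f j) *\<^sub>R f j) \<in> span (f ` {..<i})"
    apply (rule span_sum) apply (rule span_scale) apply (rule span_base) by simp
  then have ws: "?w \<in> span (f ` {..<i})"
    using u by (rule span_diff[rotated])
  have "?w \<bullet> f l = 0" if "l < i" for l
  proof -
    have "(\<Sum>j<i. (u \<bullet> f j) *\<^sub>R f j) \<bullet> f l = (\<Sum>j<i. (u \<bullet> f j) * (f j \<bullet> f l))"
      by (simp add: inner_sum_left)
    also have "\<dots> = (\<Sum>j<i. if j = l then u \<bullet> f l else 0)"
      using orth that by (intro sum.cong) auto
    also have "\<dots> = u \<bullet> f l" using that by simp
    finally show ?thesis by (simp add: inner_diff_left)
  qed
  then have "\<forall>x\<in>f ` {..<i}. orthogonal ?w x" by (auto simp: orthogonal_def)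
  then have "\<forall>x\<in>span (f ` {..<i}). orthogonal ?w x"
    using orthogonal_to_span by blast
  then have "orthogonal ?w ?w" using ws by blast
  then have "?w = 0" by (simp only: orthogonal_self)
  then show ?thesis by simp
qed

lemma limit_subspace:
  fixes X :: "nat \<Rightarrow> 'a::euclidean_space set"
  assumes X: "\<And>k. subspace (X k)" "\<And>k. dim (X k) = i"
  shows "\<exists>\<xi> (r::nat\<Rightarrow>nat). subspace \<xi> \<and> dim \<xi> = i \<and> strict_mono r \<and>
     (\<forall>\<eta>>0. \<exists>K. \<forall>k\<ge>K. \<forall>x \<in> X (r k) \<inter> sphere 0 1. \<exists>w\<in>\<xi> \<inter> sphere 0 1. norm (x - w) < \<eta>)"
proof -
  have "\<forall>k. \<exists>f. (\<forall>j<i. \<forall>l<i. f j \<bullet> f l = (if j = l then 1 else 0)) \<and> X k = span (f ` {..<i})"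
    using basis_fun X by blast
  then obtain b where b: "\<And>k. (\<forall>j<i. \<forall>l<i. b k j \<bullet> b k l = (if j = l then 1 else 0))"
     "\<And>k. X k = span (b k ` {..<i})"
    by metis
  have nb: "norm (b k j) = 1" if "j < i" for k j
    using b(1)[of k] that by (simp add: norm_eq_1)
  obtain r c where r: "strict_mono r" and c: "\<And>j. j<i \<Longrightarrow> ((\<lambda>k. b (r k) j) \<longlonglongrightarrow> c j)"
    using tuple_subseq[of i b, OF nb] by blast
  have corth: "c j \<bullet> c l = (if j = l then 1 else 0)" if "j < i" "l < i" for j l
  proof -
    have "(\<lambda>k. b (r k) j \<bullet> b (r k) l) \<longlonglongrightarrow> c j \<bullet> c l"
      by (intro tendsto_inner c that)
    moreover have "(\<lambda>k. b (r k) j \<bullet> b (r k) l) = (\<lambda>k. if j = l then 1 else 0)"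
      using b(1) that by auto
    ultimately have "(\<lambda>k. (if j = l then 1 else 0::real)) \<longlonglongrightarrow> c j \<bullet> c l" by simp
    then show ?thesis using LIMSEQ_unique tendsto_const by blast
  qed
  define \<xi> where "\<xi> = span (c ` {..<i})"
  have injc: "inj_on c {..<i}"
  proof (rule inj_onI)
    fix j l assume "j \<in> {..<i}" "l \<in> {..<i}" "c j = c l"
    then show "j = l" using corth[of j l] corth[of l l] by (auto split: if_splits)
  qed
  have "independent (c ` {..<i})"
  proof (rule pairwise_orthogonal_independent)
    show "pairwise orthogonal (c ` {..<i})"
      unfolding pairwise_def orthogonal_def using corth by fastforce
    show "0 \<notin> c ` {..<i}" using corth by fastforce
  qed
  then have dimxi: "dim \<xi> = i"
    unfolding \<xi>_def by (metis dim_span_eq_card_independent card_image injc card_lessThan)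
  have main: "\<exists>K. \<forall>k\<ge>K. \<forall>x \<in> X (r k) \<inter> sphere 0 1. \<exists>w\<in>\<xi> \<inter> sphere 0 1. norm (x - w) < \<eta>"
    if "\<eta> > 0" for \<eta>
  proof -
    define \<epsilon> where "\<epsilon> k = (\<Sum>j<i. norm (b (r k) j - c j))" for k
    have "(\<lambda>k. norm (b (r k) j - c j)) \<longlonglongrightarrow> 0" if "j < i" for j
      using tendsto_norm[OF tendsto_diff[OF c[OF that] tendsto_const[of "c j"]]] by simp
    then have "\<epsilon> \<longlonglongrightarrow> (\<Sum>j<i. 0)" unfolding \<epsilon>_def by (intro tendsto_sum) auto
    then have "\<epsilon> \<longlonglongrightarrow> 0" by simp
    then have "eventually (\<lambda>k. \<epsilon> k < min (\<eta>/2) (1/2)) sequentially"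
      by (rule order_tendstoD(2)) (use \<open>\<eta> > 0\<close> in auto)
    then obtain K where K: "\<And>k. k \<ge> K \<Longrightarrow> \<epsilon> k < min (\<eta>/2) (1/2)"
      unfolding eventually_sequentially by blast
    show ?thesis
    proof (intro exI allI impI ballI)
      fix k x assume k: "k \<ge> K" and x: "x \<in> X (r k) \<inter> sphere 0 1"
      let ?b = "b (r k)"
      have xe: "x = (\<Sum>j<i. (x \<bullet> ?b j) *\<^sub>R ?b j)"
        using expand_orth[OF b(1)[of "r k"]] x b(2) by blast
      define y where "y = (\<Sum>j<i. (x \<bullet> ?b j) *\<^sub>R c j)"
      have "y \<in> \<xi>" unfolding y_def \<xi>_def
        apply (rule span_sum) apply (rule span_scale) apply (rule span_base) by simp
      have "x - y = (\<Sum>j<i. (x \<bullet> ?b j) *\<^sub>R (?b j - c j))"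
        by (subst xe) (simp add: y_def sum_subtractf scaleR_diff_right)
      then have "norm (x - y) \<le> (\<Sum>j<i. norm ((x \<bullet> ?b j) *\<^sub>R (?b j - c j)))"
        by (metis norm_sum)
      also have "\<dots> \<le> (\<Sum>j<i. norm (?b j - c j))"
      proof (rule sum_mono)
        fix j assume "j \<in> {..<i}"
        then have "\<bar>x \<bullet> ?b j\<bar> \<le> 1"
          using Cauchy_Schwarz_ineq2[of x "?b j"] nb[of j "r k"] x by simp
        then show "norm ((x \<bullet> ?b j) *\<^sub>R (?b j - c j)) \<le> norm (?b j - c j)"
          by (simp add: mult_left_le_one_le)
      qed
      finally have xy: "norm (x - y) \<le> \<epsilon> k" unfolding \<epsilon>_def by simp
      have nx: "norm x = 1" using x by simp
      have "\<bar>norm y - 1\<bar> \<le> norm (x - y)"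
        using nx norm_triangle_ineq3[of x y] norm_triangle_ineq3[of y x] by (simp add: norm_minus_commute)
      then have ny: "\<bar>norm y - 1\<bar> \<le> \<epsilon> k" using xy by simp
      have ny0: "norm y > 0" using ny K[OF k] by linarith
      define w where "w = (1 / norm y) *\<^sub>R y"
      have "w \<in> \<xi>" unfolding w_def using \<open>y \<in> \<xi>\<close> \<xi>_def by (simp add: span_scale)
      moreover have "norm w = 1" unfolding w_def using ny0 by simp
      moreover have "norm (y - w) = \<bar>norm y - 1\<bar>"
      proof -
        have "y - w = (1 - 1 / norm y) *\<^sub>R y" unfolding w_def by (simp add: algebra_simps)
        then have "norm (y - w) = \<bar>1 - 1 / norm y\<bar> * norm y" by simp
        also have "\<dots> = \<bar>(1 - 1 / norm y) * norm y\<bar>" using ny0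
          by (simp add: abs_mult)
        also have "(1 - 1 / norm y) * norm y = norm y - 1" using ny0
          by (simp add: field_simps)
        finally show ?thesis .
      qed
      moreover have "norm (x - w) \<le> norm (x - y) + norm (y - w)"
        using norm_triangle_ineq[of "x - y" "y - w"] by simp
      ultimately show "\<exists>w\<in>\<xi> \<inter> sphere 0 1. norm (x - w) < \<eta>"
        using xy ny K[OF k] by (intro bexI[of _ w]) auto
    qed
  qed
  have "subspace \<xi> \<and> dim \<xi> = i \<and> strict_mono r \<and>
     (\<forall>\<eta>>0. \<exists>K. \<forall>k\<ge>K. \<forall>x \<in> X (r k) \<inter> sphere 0 1. \<exists>w\<in>\<xi> \<inter> sphere 0 1. norm (x - w) < \<eta>)"
    using dimxi r main unfolding \<xi>_def by simp
  then show ?thesis by blast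
qed
lemma small_inv:
  assumes "(x::real) > 0"
  shows "\<exists>n::nat. 1 / (real n + 1) < x"
proof -
  obtain n :: nat where "n > 0" "inverse (real n) < x" using ex_inverse_of_nat_less[OF assms] by blast
  moreover have "1 / (real n + 1) \<le> inverse (real n)" using \<open>n > 0\<close>
    by (simp add: divide_simps inverse_eq_divide)
  ultimately show ?thesis by (intro exI[of _ n]) linarith
qed

lemma nbhd_eq: "nbhd \<eta> \<omega> = sphere 0 1 \<inter> (\<Union>u\<in>\<omega>. ball u \<eta>)"
  unfolding nbhd_def by (auto simp: dist_norm norm_minus_commute)

lemma nbhd_mono: "\<eta> \<le> \<eta>' \<Longrightarrow> nbhd \<eta> \<omega> \<subseteq> nbhd \<eta>' \<omega>"
  unfolding nbhd_def by (auto intro: less_le_trans)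

lemma meas_sub:
  fixes \<mu> :: "'a::euclidean_space measure"
  assumes sets_mu: "sets \<mu> = sets (restrict_space borel (sphere (0::'a) 1))"
    and "B \<in> sets borel" "B \<subseteq> sphere 0 1"
  shows "B \<in> sets \<mu>"
  unfolding sets_mu using assms(2,3)
  by (subst sets_restrict_space_iff) auto

lemma meas_nbhd:
  fixes \<mu> :: "'a::euclidean_space measure"
  assumes sets_mu: "sets \<mu> = sets (restrict_space borel (sphere (0::'a) 1))"
  shows "nbhd \<eta> \<omega> \<in> sets \<mu>"
proof (rule meas_sub[OF sets_mu])
  show "nbhd \<eta> \<omega> \<in> sets borel" unfolding nbhd_eq
    by (intro sets.Int borel_closed borel_open open_UN open_ball) auto
  show "nbhd \<eta> \<omega> \<subseteq> sphere 0 1" unfolding nbhd_def by auto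
qed

lemma key:
  fixes \<mu> :: "'a::euclidean_space measure"
  assumes fin: "finite_measure \<mu>"
    and sets_mu: "sets \<mu> = sets (restrict_space borel (sphere (0::'a) 1))"
    and L: "\<And>\<xi>. subspace \<xi> \<Longrightarrow> dim \<xi> = i \<Longrightarrow> measure \<mu> (\<xi> \<inter> sphere 0 1) < L"
  shows "\<exists>\<eta>>0. \<exists>c<L. \<forall>\<xi>. subspace \<xi> \<and> dim \<xi> = i \<longrightarrow> measure \<mu> (nbhd \<eta> (\<xi> \<inter> sphere 0 1)) \<le> c"
proof (rule ccontr)
  let ?S = "sphere (0::'a) 1"
  assume "\<not> ?thesis"
  then have neg: "\<forall>\<eta>>0. \<forall>c<L. \<exists>\<xi>. subspace \<xi> \<and> dim \<xi> = i \<and> measure \<mu> (nbhd \<eta> (\<xi> \<inter> ?S)) > c"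
    by (meson not_le)
  have "\<forall>k::nat. \<exists>\<xi>. subspace \<xi> \<and> dim \<xi> = i \<and>
          measure \<mu> (nbhd (1 / (real k + 1)) (\<xi> \<inter> ?S)) > L - 1 / (real k + 1)"
  proof
    fix k :: nat
    show "\<exists>\<xi>. subspace \<xi> \<and> dim \<xi> = i \<and>
          measure \<mu> (nbhd (1 / (real k + 1)) (\<xi> \<inter> ?S)) > L - 1 / (real k + 1)"
      using neg[rule_format, of "1 / (real k + 1)" "L - 1 / (real k + 1)"] by simp
  qed
  then obtain X where X: "\<And>k. subspace (X k)" "\<And>k. dim (X k) = i"
    "\<And>k. measure \<mu> (nbhd (1 / (real k + 1)) (X k \<inter> ?S)) > L - 1 / (real k + 1)"
    by metis
  obtain \<xi> and r :: "nat \<Rightarrow> nat" where xi: "subspace \<xi>" "dim \<xi> = i" and r: "strict_mono r"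
    and approx: "\<And>\<eta>. \<eta> > 0 \<Longrightarrow> \<exists>K. \<forall>k\<ge>K. \<forall>x \<in> X (r k) \<inter> ?S. \<exists>w\<in>\<xi> \<inter> ?S. norm (x - w) < \<eta>"
    using limit_subspace[of X i, OF X(1,2)] by blast
  have A: "measure \<mu> (nbhd \<eta> (\<xi> \<inter> ?S)) \<ge> L" if "\<eta> > 0" for \<eta>
  proof (rule ccontr)
    assume "\<not> L \<le> measure \<mu> (nbhd \<eta> (\<xi> \<inter> ?S))"
    then have eps: "L - measure \<mu> (nbhd \<eta> (\<xi> \<inter> ?S)) > 0" by simp
    obtain K where K: "\<And>k x. k \<ge> K \<Longrightarrow> x \<in> X (r k) \<inter> ?S \<Longrightarrow> \<exists>w\<in>\<xi> \<inter> ?S. norm (x - w) < \<eta>/2"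
      using approx[of "\<eta>/2"] \<open>\<eta> > 0\<close> by (metis half_gt_zero)
    obtain n :: nat where n: "1 / (real n + 1) < min (\<eta>/2) (L - measure \<mu> (nbhd \<eta> (\<xi> \<inter> ?S)))"
      using small_inv[of "min (\<eta>/2) (L - measure \<mu> (nbhd \<eta> (\<xi> \<inter> ?S)))"] eps \<open>\<eta> > 0\<close> by auto
    define k where "k = max K n"
    have "real n \<le> real (r k)" using seq_suble[OF r, of k] unfolding k_def by simp
    then have le: "1 / (real (r k) + 1) \<le> 1 / (real n + 1)"
      by (intro divide_left_mono) auto
    have sub: "nbhd (1 / (real (r k) + 1)) (X (r k) \<inter> ?S) \<subseteq> nbhd \<eta> (\<xi> \<inter> ?S)"
    proof
      fix x assume "x \<in> nbhd (1 / (real (r k) + 1)) (X (r k) \<inter> ?S)"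
      then obtain u where x: "x \<in> ?S" and u: "u \<in> X (r k) \<inter> ?S" and xu: "norm (x - u) < 1 / (real (r k) + 1)"
        unfolding nbhd_def by blast
      obtain w where w: "w \<in> \<xi> \<inter> ?S" "norm (u - w) < \<eta>/2"
        using K[OF _ u] unfolding k_def by auto
      have "norm (x - w) \<le> norm (x - u) + norm (u - w)"
        using norm_triangle_ineq[of "x - u" "u - w"] by simp
      then have "norm (x - w) < \<eta>" using xu w le n by linarith
      then show "x \<in> nbhd \<eta> (\<xi> \<inter> ?S)" unfolding nbhd_def using x w by blast
    qed
    have "L - 1 / (real (r k) + 1) < measure \<mu> (nbhd (1 / (real (r k) + 1)) (X (r k) \<inter> ?S))"
      by (rule X(3))
    also have "\<dots> \<le> measure \<mu> (nbhd \<eta> (\<xi> \<inter> ?S))"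
      by (rule finite_measure.finite_measure_mono[OF fin sub meas_nbhd[OF sets_mu]])
    finally show False using le n by linarith
  qed
  define B where "B p = nbhd (1 / (real p + 1)) (\<xi> \<inter> ?S)" for p :: nat
  have "range B \<subseteq> sets \<mu>" unfolding B_def using meas_nbhd[OF sets_mu] by blast
  moreover have "decseq B"
  proof (rule decseq_SucI)
    fix p :: nat
    have "1 / (real (Suc p) + 1) \<le> 1 / (real p + 1)" by (intro divide_left_mono) auto
    then show "B (Suc p) \<subseteq> B p" unfolding B_def by (rule nbhd_mono)
  qed
  ultimately have lim: "(\<lambda>p. measure \<mu> (B p)) \<longlonglongrightarrow> measure \<mu> (\<Inter>p. B p)"
    by (rule finite_measure.finite_Lim_measure_decseq[OF fin])
  have "(\<Inter>p. B p) = \<xi> \<inter> ?S"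
  proof
    show "\<xi> \<inter> ?S \<subseteq> (\<Inter>p. B p)" unfolding B_def nbhd_def by force
    show "(\<Inter>p. B p) \<subseteq> \<xi> \<inter> ?S"
    proof
      fix x assume x: "x \<in> (\<Inter>p. B p)"
      have cl: "closed (\<xi> \<inter> ?S)" using closed_subspace[OF xi(1)] by auto
      have "\<exists>y\<in>\<xi> \<inter> ?S. dist y x < e" if "e > 0" for e
      proof -
        obtain p :: nat where p: "1 / (real p + 1) < e" using small_inv \<open>e > 0\<close> by blast
        from x have "x \<in> B p" by blast
        then obtain u where "u \<in> \<xi> \<inter> ?S" "norm (x - u) < 1 / (real p + 1)"
          unfolding B_def nbhd_def by blast
        then show ?thesis using p by (intro bexI[of _ u]) (auto simp: dist_norm norm_minus_commute)
      qed
      then show "x \<in> \<xi> \<inter> ?S" using closed_approachable[OF cl] by blast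
    qed
  qed
  then have lim2: "(\<lambda>p. measure \<mu> (B p)) \<longlonglongrightarrow> measure \<mu> (\<xi> \<inter> ?S)" using lim by simp
  have "L \<le> measure \<mu> (\<xi> \<inter> ?S)"
    by (rule LIMSEQ_le_const[OF lim2]) (auto simp: B_def intro!: A)
  then show False using L[OF xi] by simp
qed
lemma N_large:
  fixes U :: "nat \<Rightarrow> 'a::euclidean_space set" and v :: "nat \<Rightarrow> 'a"
  assumes dim2: "DIM('a) \<ge> 2" and adm: "admissible_partition \<mu> m N U v" and Km: "K < m"
  shows "K < N"
proof -
  have cov: "(\<Union>i\<in>{1..N}. U i) = sphere 0 1" and
    U: "\<And>i. i \<in> {1..N} \<Longrightarrow> U i \<subseteq> sphere 0 1 \<and> diameter (U i) < 1 / real m"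
    using adm unfolding admissible_partition_def by auto
  obtain e1 e2 :: 'a where e: "e1 \<in> Basis" "e2 \<in> Basis" "e1 \<noteq> e2"
  proof -
    have "card (Basis :: 'a set) \<ge> 2" using dim2 by simp
    then obtain A where "A \<subseteq> (Basis::'a set)" "card A = 2"
      by (meson obtain_subset_with_card_n)
    then obtain a b where "A = {a, b}" "a \<noteq> b" by (meson card_2_iff)
    then show ?thesis using that \<open>A \<subseteq> Basis\<close> by auto
  qed
  define t where "t j = real j / (real K + 1)" for j :: nat
  define p where "p j = t j *\<^sub>R e1 + sqrt (1 - (t j)^2) *\<^sub>R e2" for j
  have t01: "0 \<le> t j \<and> t j \<le> 1" if "j \<in> {0..K}" for j
    using that unfolding t_def by auto
  have psph: "p j \<in> sphere 0 1" if "j \<in> {0..K}" for j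
  proof -
    have o: "e1 \<bullet> e2 = 0" "e2 \<bullet> e1 = 0" "e1 \<bullet> e1 = 1" "e2 \<bullet> e2 = 1"
      using e by (auto simp: inner_Basis)
    have sq: "(sqrt (1 - (t j)^2))^2 = 1 - (t j)^2"
      using t01[OF that] by (simp add: power_le_one)
    have "p j \<bullet> p j = (t j)^2 + (sqrt (1 - (t j)^2))^2"
      unfolding p_def by (simp add: inner_add_left inner_add_right o power2_eq_square)
    then have "p j \<bullet> p j = 1" using sq by simp
    then show ?thesis by (simp add: norm_eq_1)
  qed
  have far: "norm (p j - p j') \<ge> 1 / (real K + 1)" if "j \<noteq> j'" for j j'
  proof -
    have o: "e1 \<bullet> e2 = 0" "e1 \<bullet> e1 = 1" using e by (auto simp: inner_Basis)
    have "(p j - p j') \<bullet> e1 = t j - t j'"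
      unfolding p_def by (simp add: inner_diff_left inner_add_left o inner_commute[of e2 e1])
    then have "\<bar>t j - t j'\<bar> \<le> norm (p j - p j')" using Basis_le_norm[OF e(1), of "p j - p j'"] by simp
    moreover have "\<bar>t j - t j'\<bar> = \<bar>real j - real j'\<bar> / (real K + 1)"
      unfolding t_def by (simp add: diff_divide_distrib[symmetric])
    moreover have "\<bar>real j - real j'\<bar> \<ge> 1" using that by linarith
    moreover have "1 / (real K + 1) \<le> \<bar>real j - real j'\<bar> / (real K + 1)"
      using \<open>\<bar>real j - real j'\<bar> \<ge> 1\<close> by (intro divide_right_mono) auto
    ultimately show ?thesis by linarith
  qed
  have "\<forall>j\<in>{0..K}. \<exists>l\<in>{1..N}. p j \<in> U l" using psph cov by blast
  then obtain g where g: "\<And>j. j \<in> {0..K} \<Longrightarrow> g j \<in> {1..N} \<and> p j \<in> U (g j)" by metis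
  have "inj_on g {0..K}"
  proof (rule inj_onI, rule ccontr)
    fix j j' assume j: "j \<in> {0..K}" "j' \<in> {0..K}" "g j = g j'" "j \<noteq> j'"
    let ?l = "g j"
    have Ul: "U ?l \<subseteq> sphere 0 1" "diameter (U ?l) < 1 / real m" using U g[OF j(1)] by auto
    have "bounded (U ?l)" using Ul(1) bounded_sphere bounded_subset by blast
    then have "dist (p j) (p j') \<le> diameter (U ?l)"
      using g[OF j(1)] g[OF j(2)] j(3) by (intro diameter_bounded_bound) auto
    moreover have "1 / real m \<le> 1 / (real K + 1)" using Km by (intro divide_left_mono) auto
    ultimately show False using far[OF j(4)] Ul(2) by (simp add: dist_norm)
  qed
  moreover have "g ` {0..K} \<subseteq> {1..N}" using g by auto
  ultimately have "card {0..K} \<le> card {1..N}" by (intro card_inj_on_le) auto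
  then show ?thesis by simp
qed
lemma step:
  fixes \<mu> :: "'a::euclidean_space measure" and UU :: "nat \<Rightarrow> 'a set" and vv :: "nat \<Rightarrow> 'a"
  assumes fin: "finite_measure \<mu>"
    and sets_mu: "sets \<mu> = sets (restrict_space borel (sphere (0::'a) 1))"
    and adm: "admissible_partition \<mu> m Nn UU vv"
    and Mpos: "measure \<mu> (space \<mu>) > 0"
    and eta: "2 * \<eta>0 \<le> e" "1 / real m < \<eta>0"
    and cb: "measure \<mu> (nbhd e (\<xi> \<inter> sphere 0 1)) \<le> d * measure \<mu> (space \<mu>)"
    and ltb: "(1 - lt) / real Nn < (lt - d) * measure \<mu> (space \<mu>)" "lt < 1"
  shows "mubar_m \<mu> Nn UU vv (nbhd \<eta>0 (\<xi> \<inter> sphere 0 1)) / measure \<mu> (space \<mu>) < lt"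
proof -
  let ?S = "sphere (0::'a) 1"
  let ?M = "measure \<mu> (space \<mu>)"
  let ?A = "nbhd \<eta>0 (\<xi> \<inter> ?S)"
  have spS: "space \<mu> = ?S"
    using sets_eq_imp_space_eq[OF sets_mu] by (simp add: space_restrict_space)
  have cov: "(\<Union>i\<in>{1..Nn}. UU i) = ?S"
    and disj: "\<And>i j. i \<in> {1..Nn} \<Longrightarrow> j \<in> {1..Nn} \<Longrightarrow> i \<noteq> j \<Longrightarrow> UU i \<inter> UU j = {}"
    and U: "\<And>i. i \<in> {1..Nn} \<Longrightarrow> UU i \<in> sets borel \<and> UU i \<subseteq> ?S \<and> diameter (UU i) < 1 / real m \<and> vv i \<in> UU i"
    using adm unfolding admissible_partition_def by auto
  have Nn: "Nn > 0"
  proof (rule ccontr)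
    assume "\<not> Nn > 0" then have "Nn = 0" by simp
    then have "?S = {}" using cov by simp
    moreover obtain b :: 'a where "b \<in> Basis" using nonempty_Basis by blast
    then have "b \<in> ?S" by (simp add: norm_Basis)
    ultimately show False by simp
  qed
  have Umeas: "UU j \<in> sets \<mu>" if "j \<in> {1..Nn}" for j
    using U[OF that] by (intro meas_sub[OF sets_mu]) auto
  have dfam: "disjoint_family_on UU B" if "B \<subseteq> {1..Nn}" for B
    using disj that unfolding disjoint_family_on_def by blast
  have unionmeas: "measure \<mu> (\<Union>j\<in>B. UU j) = (\<Sum>j\<in>B. measure \<mu> (UU j))" if "B \<subseteq> {1..Nn}" for B
    using that Umeas dfam[OF that] finite_subset[OF that]
    by (intro finite_measure.finite_measure_finite_Union[OF fin]) auto
  define J where "J = {j \<in> {1..Nn}. vv j \<in> ?A}"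
  have Jsub: "J \<subseteq> {1..Nn}" unfolding J_def by auto
  define t where "t = 1 / real Nn"
  have t0: "t > 0" using Nn unfolding t_def by simp
  have mass: "mu_m_mass \<mu> Nn UU = ?M + t"
  proof -
    have "mu_m_mass \<mu> Nn UU = (\<Sum>j\<in>{1..Nn}. measure \<mu> (UU j)) + real Nn * (1 / (real Nn)^2)"
      unfolding mu_m_mass_def by (simp add: sum.distrib)
    also have "(\<Sum>j\<in>{1..Nn}. measure \<mu> (UU j)) = ?M"
      using unionmeas[of "{1..Nn}"] cov spS by simp
    also have "real Nn * (1 / (real Nn)^2) = t" unfolding t_def using Nn by (simp add: power2_eq_square)
    finally show ?thesis .
  qed
  have mum: "mu_m \<mu> Nn UU vv ?A = (\<Sum>j\<in>J. measure \<mu> (UU j)) + real (card J) * (1 / (real Nn)^2)"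
  proof -
    have "mu_m \<mu> Nn UU vv ?A = (\<Sum>j\<in>J. measure \<mu> (UU j) + 1 / (real Nn)^2)"
      unfolding mu_m_def J_def by (rule sum.inter_filter[symmetric]) simp
    then show ?thesis by (simp add: sum.distrib)
  qed
  have "(\<Union>j\<in>J. UU j) \<subseteq> nbhd e (\<xi> \<inter> ?S)"
  proof
    fix y assume "y \<in> (\<Union>j\<in>J. UU j)"
    then obtain j where j: "j \<in> J" "y \<in> UU j" by blast
    then have j1: "j \<in> {1..Nn}" "vv j \<in> ?A" unfolding J_def by auto
    then obtain u where u: "u \<in> \<xi> \<inter> ?S" "norm (vv j - u) < \<eta>0" unfolding nbhd_def by blast
    have "bounded (UU j)" using U[OF j1(1)] bounded_sphere bounded_subset by blast
    then have "dist y (vv j) \<le> diameter (UU j)"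
      using j(2) U[OF j1(1)] by (intro diameter_bounded_bound) auto
    then have "norm (y - vv j) < \<eta>0" using U[OF j1(1)] eta(2) by (simp add: dist_norm)
    moreover have "norm (y - u) \<le> norm (y - vv j) + norm (vv j - u)"
      using norm_triangle_ineq[of "y - vv j" "vv j - u"] by simp
    ultimately have "norm (y - u) < e" using u eta(1) by linarith
    moreover have "y \<in> ?S" using U[OF j1(1)] j(2) by auto
    ultimately show "y \<in> nbhd e (\<xi> \<inter> ?S)" unfolding nbhd_def using u(1) by blast
  qed
  then have "measure \<mu> (\<Union>j\<in>J. UU j) \<le> measure \<mu> (nbhd e (\<xi> \<inter> ?S))"
    by (intro finite_measure.finite_measure_mono[OF fin] meas_nbhd[OF sets_mu])
  then have s1: "(\<Sum>j\<in>J. measure \<mu> (UU j)) \<le> d * ?M" using unionmeas[OF Jsub] cb by simp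
  have "card J \<le> Nn" using card_mono[OF _ Jsub] by simp
  then have "real (card J) * (1 / (real Nn)^2) \<le> real Nn * (1 / (real Nn)^2)"
    by (intro mult_right_mono) auto
  also have "\<dots> = t" unfolding t_def using Nn by (simp add: power2_eq_square)
  finally have s2: "real (card J) * (1 / (real Nn)^2) \<le> t" .
  have num: "mu_m \<mu> Nn UU vv ?A \<le> d * ?M + t" using mum s1 s2 by simp
  have "(1 - lt) * t < (lt - d) * ?M" using ltb(1) unfolding t_def by simp
  then have "d * ?M + t < lt * (?M + t)" by (simp add: algebra_simps)
  then have lt1: "mu_m \<mu> Nn UU vv ?A < lt * mu_m_mass \<mu> Nn UU" using num mass by simp
  have mpos: "mu_m_mass \<mu> Nn UU > 0" using mass Mpos t0 by simp
  have "mubar_m \<mu> Nn UU vv ?A / ?M = mu_m \<mu> Nn UU vv ?A / mu_m_mass \<mu> Nn UU"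
    unfolding mubar_m_def using Mpos by simp
  also have "\<dots> < lt" using lt1 mpos by (simp add: pos_divide_less_eq)
  finally show ?thesis .
qed
theorem lemma5p10:
  fixes \<mu> :: "'a::euclidean_space measure"
    and q :: real
    and N :: "nat \<Rightarrow> nat"
    and U :: "nat \<Rightarrow> nat \<Rightarrow> 'a set"
    and v :: "nat \<Rightarrow> nat \<Rightarrow> 'a"
  assumes q: "1 < q" "q < real DIM('a) + 1"
    and fin: "finite_measure \<mu>"
    and sets_mu: "sets \<mu> = sets (restrict_space borel (sphere (0::'a) 1))"
    and subsp: "\<And>i \<xi>. i \<in> {1..DIM('a) - 1} \<Longrightarrow> subspace \<xi> \<Longrightarrow> dim \<xi> = i \<Longrightarrow>
                  measure \<mu> (\<xi> \<inter> sphere 0 1) / measure \<mu> (space \<mu>) < lam DIM('a) q i"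
    and part: "\<And>m. m \<ge> 1 \<Longrightarrow> admissible_partition \<mu> m (N m) (\<lambda>i. U i m) (\<lambda>i. v i m)"
  shows "\<exists>lt :: nat \<Rightarrow> real.
           (\<forall>i\<in>{1..DIM('a) - 1}. 0 < lt i \<and> lt i < lam DIM('a) q i) \<and>
           (\<exists>N0 :: real. N0 > 0 \<and> (\<exists>\<eta>0 :: real. 0 < \<eta>0 \<and> \<eta>0 < 1 \<and>
              (\<forall>m :: nat. real m > N0 \<longrightarrow>
                 (\<forall>i\<in>{1..DIM('a) - 1}. \<forall>\<xi>. subspace \<xi> \<and> dim \<xi> = i \<longrightarrow>
                    mubar_m \<mu> (N m) (\<lambda>j. U j m) (\<lambda>j. v j m) (nbhd \<eta>0 (\<xi> \<inter> sphere 0 1))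
                      / measure \<mu> (space \<mu>) < lt i))))"
proof -
  let ?n = "DIM('a)"
  let ?I = "{1..DIM('a) - 1}"
  let ?S = "sphere (0::'a) 1"
  let ?M = "measure \<mu> (space \<mu>)"
  let ?lam = "lam DIM('a) q"
  have lampos: "0 < ?lam i" "?lam i < 1" if "i \<in> ?I" for i
  proof -
    have i: "1 \<le> real i" "real i \<le> real ?n - 1" using that by auto
    have den: "real ?n + q - 1 > 0" using q i by linarith
    have num: "real i + min (real i) (q - 1) > 0" using q i by simp
    show "0 < ?lam i" unfolding lam_def using den num by simp
    have "real i + min (real i) (q - 1) < real ?n + q - 1" using i by linarith
    then show "?lam i < 1" unfolding lam_def using den by simp
  qed
  have M0: "?M \<ge> 0" by simp
  show ?thesis
  proof (cases "?M = 0")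
    case True
    show ?thesis
      apply (rule exI[of _ "\<lambda>i. ?lam i / 2"])
      using lampos True by (auto intro!: exI[of _ "1::real"] exI[of _ "1/2::real"])
  next
    case False
    then have Mpos: "?M > 0" using M0 by linarith
    have "\<forall>i\<in>?I. \<exists>\<eta>>0. \<exists>c<?lam i * ?M. \<forall>\<xi>. subspace \<xi> \<and> dim \<xi> = i \<longrightarrow>
              measure \<mu> (nbhd \<eta> (\<xi> \<inter> ?S)) \<le> c"
    proof
      fix i assume i: "i \<in> ?I"
      show "\<exists>\<eta>>0. \<exists>c<?lam i * ?M. \<forall>\<xi>. subspace \<xi> \<and> dim \<xi> = i \<longrightarrow>
              measure \<mu> (nbhd \<eta> (\<xi> \<inter> ?S)) \<le> c"
      proof (rule key[OF fin sets_mu])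
        fix \<xi> :: "'a set" assume "subspace \<xi>" "dim \<xi> = i"
        then show "measure \<mu> (\<xi> \<inter> ?S) < ?lam i * ?M"
          using subsp[OF i] Mpos by (simp add: pos_divide_less_eq)
      qed
    qed
    then obtain eta c where eta: "\<And>i. i \<in> ?I \<Longrightarrow> eta i > 0"
      and cl: "\<And>i. i \<in> ?I \<Longrightarrow> c i < ?lam i * ?M"
      and cb: "\<And>i \<xi>. i \<in> ?I \<Longrightarrow> subspace \<xi> \<Longrightarrow> dim \<xi> = i \<Longrightarrow> measure \<mu> (nbhd (eta i) (\<xi> \<inter> ?S)) \<le> c i"
      by metis
    define d where "d i = max (c i / ?M) 0" for i
    define lt where "lt i = (d i + ?lam i) / 2" for i
    have dl: "d i < ?lam i" "0 \<le> d i" "c i \<le> d i * ?M" if "i \<in> ?I" for i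
    proof -
      have "c i / ?M < ?lam i" using cl[OF that] Mpos by (simp add: pos_divide_less_eq)
      then show "d i < ?lam i" "0 \<le> d i" unfolding d_def using lampos[OF that] by auto
      have "c i = (c i / ?M) * ?M" using Mpos by simp
      also have "\<dots> \<le> d i * ?M" unfolding d_def using Mpos by (intro mult_right_mono) auto
      finally show "c i \<le> d i * ?M" .
    qed
    have ltp: "0 < lt i" "lt i < ?lam i" "d i < lt i" "lt i < 1" if "i \<in> ?I" for i
      using dl[OF that] lampos[OF that] unfolding lt_def by auto
    define \<eta>0 where "\<eta>0 = Min (insert (1/2) ((\<lambda>i. eta i / 2) ` ?I))"
    have \<eta>0: "\<eta>0 > 0" "\<eta>0 \<le> 1/2" "\<And>i. i \<in> ?I \<Longrightarrow> 2 * \<eta>0 \<le> eta i"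
    proof -
      show "\<eta>0 > 0" unfolding \<eta>0_def using eta by (subst Min_gr_iff) auto
      show "\<eta>0 \<le> 1/2" unfolding \<eta>0_def by (intro Min_le) auto
      fix i assume "i \<in> ?I"
      then have "\<eta>0 \<le> eta i / 2" unfolding \<eta>0_def by (intro Min_le) auto
      then show "2 * \<eta>0 \<le> eta i" by simp
    qed
    have "\<forall>i\<in>?I. \<exists>K::nat. \<forall>Nn::nat. Nn > K \<longrightarrow> (1 - lt i) / real Nn < (lt i - d i) * ?M"
    proof
      fix i assume i: "i \<in> ?I"
      have pos: "(lt i - d i) * ?M > 0" using ltp[OF i] Mpos by simp
      obtain K :: nat where K: "(1 - lt i) / ((lt i - d i) * ?M) < real K"
        using reals_Archimedean2 by blast
      show "\<exists>K::nat. \<forall>Nn::nat. Nn > K \<longrightarrow> (1 - lt i) / real Nn < (lt i - d i) * ?M"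
      proof (intro exI allI impI)
        fix Nn :: nat assume "Nn > K"
        then have "(1 - lt i) / ((lt i - d i) * ?M) < real Nn" using K by linarith
        then have "1 - lt i < real Nn * ((lt i - d i) * ?M)" using pos by (simp add: pos_divide_less_eq)
        moreover have "real Nn > 0" using \<open>Nn > K\<close> by simp
        ultimately show "(1 - lt i) / real Nn < (lt i - d i) * ?M"
          by (simp add: pos_divide_less_eq mult.commute)
      qed
    qed
    then obtain Kf where Kf: "\<And>i Nn. i \<in> ?I \<Longrightarrow> Nn > Kf i \<Longrightarrow> (1 - lt i) / real Nn < (lt i - d i) * ?M"
      by metis
    define Km where "Km = Max (insert 0 (Kf ` ?I))"
    have Km: "Kf i \<le> Km" if "i \<in> ?I" for i unfolding Km_def using that by (intro Max_ge) auto
    obtain m0 :: nat where m0: "1 / \<eta>0 < real m0" using reals_Archimedean2 by blast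
    have A: "\<forall>i\<in>?I. 0 < lt i \<and> lt i < ?lam i" using ltp by auto
    have B: "\<forall>m::nat. real (max Km m0) + 1 < real m \<longrightarrow> (\<forall>i\<in>?I. \<forall>\<xi>. subspace \<xi> \<and> dim \<xi> = i \<longrightarrow>
       mubar_m \<mu> (N m) (\<lambda>j. U j m) (\<lambda>j. v j m) (nbhd \<eta>0 (\<xi> \<inter> ?S)) / ?M < lt i)"
    proof (intro allI impI ballI)
      fix m :: nat and i and \<xi> :: "'a set"
      assume m: "real (max Km m0) + 1 < real m" and i: "i \<in> ?I" and xi: "subspace \<xi> \<and> dim \<xi> = i"
      have m1: "m \<ge> 1" using m by simp
      have adm: "admissible_partition \<mu> m (N m) (\<lambda>j. U j m) (\<lambda>j. v j m)" using part[OF m1] .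
      have dim2: "DIM('a) \<ge> 2" using i by auto
      have "Km < N m" using N_large[OF dim2 adm, of Km] m by simp
      then have NK: "Kf i < N m" using Km[OF i] by simp
      have "1 / real m < \<eta>0"
      proof -
        have "1 / \<eta>0 < real m" using m0 m by simp
        then show ?thesis using \<eta>0(1) m1 by (simp add: divide_less_eq mult.commute)
      qed
      show "mubar_m \<mu> (N m) (\<lambda>j. U j m) (\<lambda>j. v j m) (nbhd \<eta>0 (\<xi> \<inter> ?S)) / ?M < lt i"
      proof (rule step[OF fin sets_mu adm Mpos])
        show "2 * \<eta>0 \<le> eta i" using \<eta>0(3)[OF i] .
        show "1 / real m < \<eta>0" by fact
        show "measure \<mu> (nbhd (eta i) (\<xi> \<inter> ?S)) \<le> d i * ?M"
          using cb[OF i] xi dl(3)[OF i] by force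
        show "(1 - lt i) / real (N m) < (lt i - d i) * ?M" using Kf[OF i NK] .
        show "lt i < 1" using ltp[OF i] by simp
      qed
    qed
    show ?thesis using A B \<eta>0(1,2)
      by (intro exI[of _ lt] conjI exI[of _ "real (max Km m0) + 1"] exI[of _ \<eta>0]) auto
  qed
qed
end
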